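(* Let $J=JCK(Z,\delta)$. Then $\dim_{\mathbb F}\mathrm{Inder}(J)=\dim_{\mathbb F}J=8\dim_{\mathbb F}Z$ (dimensions as cardinals).
   Context: Let $\mathbb F$ be a field of characteristic $\neq 2$, $Z$ a unital commutative associative $\mathbb F$-algebra, and $\delta$ a derivation of $Z$ such that $Z\delta(Z)=Z$ (the $\mathbb F$-span of all products $f\delta(g)$, $f,g\in Z$, is $Z$). The Cheng-Kac Jordan superalgebra $J=JCK(Z,\delta)=J_{\bar0}\oplus J_{\bar1}$ is defined as follows: $J_{\bar0}=Z1\oplus Zw_1\oplus Zw_2\oplus Zw_3$ and $J_{\bar1}=Zx\oplus Zx_1\oplus Zx_2\oplus Zx_3$ are free $Z$-modules of rank 4; $J_{\bar0}$ is the $Z$-algebra $(\mathbb F1\oplus\mathbb Fw_1\oplus\mathbb Fw_2\oplus\mathbb Fw_3)\otimes_{\mathbb F}Z$ with $1$ the identity, $w_1^2=w_2^2=1$, $w_3^2=-1$, $w_iw_j=0$ for $i\ne j$. For $f,g\in Z$ and $i,j\in\{1,2,3\}$ the remaining products are: $f(gx)=(fg)x$, $f(gx_j)=(fg)x_j$, $(fw_i)(gx)=(\delta(f)g)x_i$, $(fw_i)(gx_j)=-(fg)x_{i\times j}$, $(fx)(gx)=\delta(f)g-f\delta(g)$, $(fx)(gx_j)=-(fg)w_j$, $(fx_i)(gx)=(fg)w_i$, $(fx_i)(gx_j)=0$, extended by supercommutativity ($ab=(-1)^{|a||b|}ba$), where $x_{1\times2}=-x_{2\times1}=x_3$, $x_{1\times3}=-x_{3\times1}=x_2$,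 $x_{3\times2}=-x_{2\times3}=x_1$, $x_{i\times i}=0$. $D(a,b)$ is the map $c\mapsto a(bc)-(-1)^{|a||b|}b(ac)$, and $\mathrm{Inder}(J)$ is the span of all $D(a,b)$, $a,b\in J$ homogeneous. *)

theory Defs
  imports Complex_Main "HOL-Library.Function_Algebras" "HOL-Library.Equipollence"
begin

text \<open>Basis of JCK(Z,delta) as a free Z-module of rank 8:
  E1 = 1, W1 W2 W3 (even), X X1 X2 X3 (odd).  An element of J is its
  coefficient function idx => Z.\<close>

datatype idx = E1 | W1 | W2 | W3 | X | X1 | X2 | X3

definition idxs :: "idx set" where
  "idxs = {E1, W1, W2, W3, X, X1, X2, X3}"

definition odd_idx :: "idx \<Rightarrow> bool" where
  "odd_idx k \<longleftrightarrow> k \<in> {X, X1, X2, X3}"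

definition sv :: "idx \<Rightarrow> 'z::zero \<Rightarrow> idx \<Rightarrow> 'z" where
  "sv k z = (\<lambda>j. if j = k then z else 0)"

text \<open>bp d p f q g = (f e_p)(g e_q), as a coefficient vector.\<close>
fun bp :: "('z::comm_ring_1 \<Rightarrow> 'z) \<Rightarrow> idx \<Rightarrow> 'z \<Rightarrow> idx \<Rightarrow> 'z \<Rightarrow> idx \<Rightarrow> 'z" where
  "bp d E1 f q g = sv q (f * g)"
| "bp d p f E1 g = sv p (f * g)"
| "bp d W1 f W1 g = sv E1 (f * g)"
| "bp d W2 f W2 g = sv E1 (f * g)"
| "bp d W3 f W3 g = sv E1 (- (f * g))"
| "bp d W1 f X g = sv X1 (d f * g)"
| "bp d W2 f X g = sv X2 (d f * g)"
| "bp d W3 f X g = sv X3 (d f * g)"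
| "bp d X f W1 g = sv X1 (d g * f)"
| "bp d X f W2 g = sv X2 (d g * f)"
| "bp d X f W3 g = sv X3 (d g * f)"
| "bp d W1 f X2 g = sv X3 (- (f * g))"
| "bp d W2 f X1 g = sv X3 (f * g)"
| "bp d W1 f X3 g = sv X2 (- (f * g))"
| "bp d W3 f X1 g = sv X2 (f * g)"
| "bp d W3 f X2 g = sv X1 (- (f * g))"
| "bp d W2 f X3 g = sv X1 (f * g)"
| "bp d X2 f W1 g = sv X3 (- (f * g))"
| "bp d X1 f W2 g = sv X3 (f * g)"
| "bp d X3 f W1 g = sv X2 (- (f * g))"
| "bp d X1 f W3 g = sv X2 (f * g)"
| "bp d X2 f W3 g = sv X1 (- (f * g))"
| "bp d X3 f W2 g = sv X1 (f * g)"
| "bp d X f X g = sv E1 (d f * g - f * d g)"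
| "bp d X f X1 g = sv W1 (- (f * g))"
| "bp d X f X2 g = sv W2 (- (f * g))"
| "bp d X f X3 g = sv W3 (- (f * g))"
| "bp d X1 f X g = sv W1 (f * g)"
| "bp d X2 f X g = sv W2 (f * g)"
| "bp d X3 f X g = sv W3 (f * g)"
| "bp d p f q g = (\<lambda>_. 0)"

definition jmult :: "('z::comm_ring_1 \<Rightarrow> 'z) \<Rightarrow> (idx \<Rightarrow> 'z) \<Rightarrow> (idx \<Rightarrow> 'z) \<Rightarrow> (idx \<Rightarrow> 'z)" where
  "jmult d a c = (\<lambda>k. \<Sum>p\<in>idxs. \<Sum>q\<in>idxs. bp d p (a p) q (c q) k)"

definition is_even_el :: "(idx \<Rightarrow> 'z::zero) \<Rightarrow> bool" where
  "is_even_el a \<longleftrightarrow> (\<forall>k. odd_idx k \<longrightarrow> a k = 0)"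

definition is_odd_el :: "(idx \<Rightarrow> 'z::zero) \<Rightarrow> bool" where
  "is_odd_el a \<longleftrightarrow> (\<forall>k. \<not> odd_idx k \<longrightarrow> a k = 0)"

definition homog :: "(idx \<Rightarrow> 'z::zero) \<Rightarrow> bool" where
  "homog a \<longleftrightarrow> is_even_el a \<or> is_odd_el a"

text \<open>D(a,b)(c) = a(bc) - (-1)^{|a||b|} b(ac).  (For a = 0 or b = 0 the
  choice of parity is irrelevant since D vanishes.)\<close>
definition Dop :: "('z::comm_ring_1 \<Rightarrow> 'z) \<Rightarrow> (idx \<Rightarrow> 'z) \<Rightarrow> (idx \<Rightarrow> 'z) \<Rightarrow> (idx \<Rightarrow> 'z) \<Rightarrow> (idx \<Rightarrow> 'z)" where
  "Dop d a b = (\<lambda>c. if is_odd_el a \<and> is_odd_el b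
                     then jmult d a (jmult d b c) + jmult d b (jmult d a c)
                     else jmult d a (jmult d b c) - jmult d b (jmult d a c))"

definition scJ :: "('a \<Rightarrow> 'z \<Rightarrow> 'z) \<Rightarrow> 'a \<Rightarrow> (idx \<Rightarrow> 'z) \<Rightarrow> (idx \<Rightarrow> 'z)" where
  "scJ s c v = (\<lambda>k. s c (v k))"

definition scE :: "('a \<Rightarrow> 'z \<Rightarrow> 'z) \<Rightarrow> 'a \<Rightarrow> ((idx \<Rightarrow> 'z) \<Rightarrow> (idx \<Rightarrow> 'z))
                    \<Rightarrow> ((idx \<Rightarrow> 'z) \<Rightarrow> (idx \<Rightarrow> 'z))" where
  "scE s c \<phi> = (\<lambda>v. scJ s c (\<phi> v))"

definition Inder :: "('a::field \<Rightarrow> 'z::comm_ring_1 \<Rightarrow> 'z) \<Rightarrow> ('z \<Rightarrow> 'z)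
                     \<Rightarrow> ((idx \<Rightarrow> 'z) \<Rightarrow> (idx \<Rightarrow> 'z)) set" where
  "Inder s d = module.span (scE s) {Dop d a b | a b. homog a \<and> homog b}"

definition is_basis_of :: "('a::field \<Rightarrow> 'v::ab_group_add \<Rightarrow> 'v) \<Rightarrow> 'v set \<Rightarrow> 'v set \<Rightarrow> bool" where
  "is_basis_of s V B \<longleftrightarrow> B \<subseteq> V \<and> \<not> module.dependent s B \<and> module.span s B = V"

end

theory Submission
  imports Defs "HOL-Algebra.Free_Abelian_Groups"
begin

lemma in_idxs[simp]: "p \<in> idxs" by (cases p) (auto simp: idxs_def)

lemma fin_idxs[simp]: "finite idxs" by (simp add: idxs_def)

lemma sv_apply[simp]: "sv k z j = (if j = k then z else 0)" by (simp add: sv_def)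

definition Dm :: "('z::comm_ring_1 \<Rightarrow> 'z) \<Rightarrow> (idx \<Rightarrow> 'z) \<Rightarrow> (idx \<Rightarrow> 'z) \<Rightarrow> (idx \<Rightarrow> 'z) \<Rightarrow> (idx \<Rightarrow> 'z)" where
  "Dm d a b = (\<lambda>c. jmult d a (jmult d b c) - jmult d b (jmult d a c))"
definition Dp :: "('z::comm_ring_1 \<Rightarrow> 'z) \<Rightarrow> (idx \<Rightarrow> 'z) \<Rightarrow> (idx \<Rightarrow> 'z) \<Rightarrow> (idx \<Rightarrow> 'z) \<Rightarrow> (idx \<Rightarrow> 'z)" where
  "Dp d a b = (\<lambda>c. jmult d a (jmult d b c) + jmult d b (jmult d a c))"

definition G :: "('z::comm_ring_1 \<Rightarrow> 'z) \<Rightarrow> idx \<Rightarrow> 'z \<Rightarrow> (idx \<Rightarrow> 'z) \<Rightarrow> (idx \<Rightarrow> 'z)" where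
  "G d k u = (case k of E1 \<Rightarrow> Dp d (sv X u) (sv X 1) | W1 \<Rightarrow> Dp d (sv X u) (sv X1 1)
     | W2 \<Rightarrow> Dp d (sv X u) (sv X2 1) | W3 \<Rightarrow> Dp d (sv X u) (sv X3 1)
     | X \<Rightarrow> Dm d (sv W1 u) (sv X1 1) | X1 \<Rightarrow> Dm d (sv W1 u) (sv X 1)
     | X2 \<Rightarrow> Dm d (sv W2 u) (sv X 1) | X3 \<Rightarrow> Dm d (sv W3 u) (sv X 1))"

definition Dpm :: "('z::comm_ring_1 \<Rightarrow> 'z) \<Rightarrow> idx \<Rightarrow> idx \<Rightarrow> (idx \<Rightarrow> 'z) \<Rightarrow> (idx \<Rightarrow> 'z) \<Rightarrow> (idx \<Rightarrow> 'z) \<Rightarrow> (idx \<Rightarrow> 'z)" where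
  "Dpm d p q = (if odd_idx p \<and> odd_idx q then Dp d else Dm d)"

fun tg :: "idx \<Rightarrow> idx \<Rightarrow> idx" where
  "tg W1 W2 = W3" | "tg W2 W1 = W3" | "tg W1 W3 = W2" | "tg W3 W1 = W2" | "tg W2 W3 = W1" | "tg W3 W2 = W1"
| "tg E1 X = X" | "tg X E1 = X" | "tg W1 X = X1" | "tg X W1 = X1" | "tg W2 X = X2" | "tg X W2 = X2"
| "tg W3 X = X3" | "tg X W3 = X3"
| "tg W1 X1 = X" | "tg X1 W1 = X" | "tg W2 X2 = X" | "tg X2 W2 = X" | "tg W3 X3 = X" | "tg X3 W3 = X"
| "tg X X = E1" | "tg X X1 = W1" | "tg X1 X = W1" | "tg X X2 = W2" | "tg X2 X = W2" | "tg X X3 = W3" | "tg X3 X = W3"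
| "tg _ _ = E1"

fun cf :: "('z::comm_ring_1 \<Rightarrow> 'z) \<Rightarrow> idx \<Rightarrow> idx \<Rightarrow> 'z \<Rightarrow> 'z \<Rightarrow> 'z" where
  "cf d W1 W2 f g = - (f * g)" | "cf d W2 W1 f g = f * g" | "cf d W1 W3 f g = - (f * g)" | "cf d W3 W1 f g = f * g"
| "cf d W2 W3 f g = f * g" | "cf d W3 W2 f g = - (f * g)"
| "cf d E1 X f g = d f * g" | "cf d X E1 f g = - (d g * f)"
| "cf d W1 X f g = f * g" | "cf d X W1 f g = - (f * g)" | "cf d W2 X f g = f * g" | "cf d X W2 f g = - (f * g)"
| "cf d W3 X f g = f * g" | "cf d X W3 f g = - (f * g)"
| "cf d W1 X1 f g = f * g" | "cf d X1 W1 f g = - (f * g)" | "cf d W2 X2 f g = f * g" | "cf d X2 W2 f g = - (f * g)"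
| "cf d W3 X3 f g = - (f * g)" | "cf d X3 W3 f g = f * g"
| "cf d X X f g = f * g" | "cf d X X1 f g = f * g" | "cf d X1 X f g = f * g" | "cf d X X2 f g = f * g"
| "cf d X2 X f g = f * g" | "cf d X X3 f g = f * g" | "cf d X3 X f g = f * g"
| "cf d _ _ f g = 0"

locale jck =
  fixes s :: "'a::field \<Rightarrow> 'z::comm_ring_1 \<Rightarrow> 'z" and d :: "'z \<Rightarrow> 'z"
  assumes vs: "vector_space s"
    and alg: "\<And>c x y. s c (x * y) = s c x * y"
    and lin: "Vector_Spaces.linear s s d"
    and leib: "\<And>x y. d (x * y) = d x * y + x * d y"
begin

lemma mh: "module_hom s s d" using lin by (simp add: module_hom_iff_linear)
lemma d_add[simp]: "d (x + y) = d x + d y" using module_hom.add[OF mh] .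
lemma d0[simp]: "d 0 = 0" using module_hom.zero[OF mh] .
lemma d_neg[simp]: "d (- x) = - d x" using module_hom.neg[OF mh] .
lemma d_diff[simp]: "d (x - y) = d x - d y" using module_hom.diff[OF mh] .
lemma d_scale: "d (s c x) = s c (d x)" using module_hom.scale[OF mh] .
lemma d1[simp]: "d 1 = 0" using leib[of 1 1] by simp
declare leib[simp]

lemma bp_zero1[simp]: "bp d p 0 q g = (\<lambda>_. 0)"
  by (cases p; cases q) (simp_all add: sv_def fun_eq_iff)
lemma bp_zero2[simp]: "bp d p f q 0 = (\<lambda>_. 0)"
  by (cases p; cases q) (simp_all add: sv_def fun_eq_iff)

lemma jmult_sv: "jmult d (sv p f) (sv q g) = bp d p f q g"
proof -
  have a: "bp d pa (if pa = p then f else 0) qa (if qa = q then g else 0) x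
     = (if qa = q then (if pa = p then bp d p f q g x else 0) else 0)" for pa qa x
    by auto
  show ?thesis unfolding jmult_def fun_eq_iff
    by (simp add: a sum.delta cong: if_cong)
qed

lemma sv_add: "sv k ((x::'z) + y) = sv k x + sv k y" by (auto simp: fun_eq_iff)
lemma bp_add2: "bp d p f q (g + g') = bp d p f q g + bp d p f q g'"
  by (cases p; cases q) (simp_all add: fun_eq_iff algebra_simps)
lemma bp_add1: "bp d p (f + f') q g = bp d p f q g + bp d p f' q g"
  by (cases p; cases q) (simp_all add: fun_eq_iff algebra_simps)
lemma jmult_add2: "jmult d a (c + c') = jmult d a c + jmult d a c'"
  by (simp add: jmult_def fun_eq_iff bp_add2 sum.distrib)
lemma jmult_add1: "jmult d (a + a') c = jmult d a c + jmult d a' c"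
  by (simp add: jmult_def fun_eq_iff bp_add1 sum.distrib)
lemma jmult_zero2[simp]: "jmult d a (\<lambda>_. 0) = (\<lambda>_. 0)"
  by (simp add: jmult_def fun_eq_iff zero_fun_def[symmetric])
lemma jmult_zero2'[simp]: "jmult d a 0 = 0"
  using jmult_zero2 by (simp add: zero_fun_def)

lemma Dm_add: "Dm d a b (x + y) = Dm d a b x + Dm d a b y"
  by (simp add: Dm_def jmult_add2)
lemma Dp_add: "Dp d a b (x + y) = Dp d a b x + Dp d a b y"
  by (simp add: Dp_def jmult_add2)
lemma G_add: "G d k u (x + y) = G d k u x + G d k u y"
  by (cases k) (simp_all add: G_def Dm_add Dp_add)

end

lemma sum_fun_apply: "(\<Sum>r\<in>S. f r) x = (\<Sum>r\<in>S. f r x)"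
  by (induction S rule: infinite_finite_induct) auto

lemma decomp: "c = (\<Sum>r\<in>idxs. sv r (c r))"
  by (simp add: fun_eq_iff sum_fun_apply)

lemma ext8: "f E1 = g E1 \<Longrightarrow> f W1 = g W1 \<Longrightarrow> f W2 = g W2 \<Longrightarrow> f W3 = g W3 \<Longrightarrow>
  f X = g X \<Longrightarrow> f X1 = g X1 \<Longrightarrow> f X2 = g X2 \<Longrightarrow> f X3 = g X3 \<Longrightarrow> f = g"
  by (rule ext, case_tac x) auto

lemma op_ext:
  fixes A B :: "(idx \<Rightarrow> 'z::comm_ring_1) \<Rightarrow> (idx \<Rightarrow> 'z)"
  assumes "\<And>x y. A (x+y) = A x + A y" "\<And>x y. B (x+y) = B x + B y"
   "\<And>r h. A (sv r h) = B (sv r h)"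
  shows "A = B"
proof
  fix c
  interpret a: additive A by unfold_locales (rule assms(1))
  interpret b: additive B by unfold_locales (rule assms(2))
  have "A c = A (\<Sum>r\<in>idxs. sv r (c r))" by (subst decomp[of c]) simp
  also have "\<dots> = B (\<Sum>r\<in>idxs. sv r (c r))" by (simp add: a.sum b.sum assms(3))
  also have "\<dots> = B c" by (subst decomp[of c]) simp
  finally show "A c = B c" .
qed

context jck begin
lemma Dpm_add: "Dpm d p q a b (x + y) = Dpm d p q a b x + Dpm d p q a b y"
  by (simp add: Dpm_def Dm_add Dp_add)

lemma main_eq: "Dpm d p q (sv p f) (sv q g) = G d (tg p q) (cf d p q f g)"
  apply (rule op_ext, rule Dpm_add, rule G_add)
  subgoal for r h
    by (cases p; cases q; cases r; rule ext8; simp add: G_def Dm_def Dp_def Dpm_def odd_idx_def jmult_sv algebra_simps)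
  done

lemma jmult_zero1[simp]: "jmult d 0 c = 0"
  by (simp add: jmult_def fun_eq_iff zero_fun_def[symmetric])
lemma sv_0[simp]: "sv k 0 = 0" by (simp add: fun_eq_iff)
lemma Dm_add1: "Dm d (a + a') b = Dm d a b + Dm d a' b"
  by (simp add: Dm_def fun_eq_iff jmult_add1 jmult_add2)
lemma Dm_add2: "Dm d a (b + b') = Dm d a b + Dm d a b'"
  by (simp add: Dm_def fun_eq_iff jmult_add1 jmult_add2)
lemma Dp_add1: "Dp d (a + a') b = Dp d a b + Dp d a' b"
  by (simp add: Dp_def fun_eq_iff jmult_add1 jmult_add2)
lemma Dp_add2: "Dp d a (b + b') = Dp d a b + Dp d a b'"
  by (simp add: Dp_def fun_eq_iff jmult_add1 jmult_add2)
lemma Dm_01[simp]: "Dm d 0 b = 0" by (simp add: Dm_def fun_eq_iff zero_fun_def[symmetric])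
lemma Dm_02[simp]: "Dm d a 0 = 0" by (simp add: Dm_def fun_eq_iff zero_fun_def[symmetric])
lemma Dp_01[simp]: "Dp d 0 b = 0" by (simp add: Dp_def fun_eq_iff zero_fun_def[symmetric])
lemma Dp_02[simp]: "Dp d a 0 = 0" by (simp add: Dp_def fun_eq_iff zero_fun_def[symmetric])

lemma Dm_expand: "Dm d a b = (\<Sum>p\<in>idxs. \<Sum>q\<in>idxs. Dm d (sv p (a p)) (sv q (b q)))"
proof -
  interpret A1: additive "\<lambda>a. Dm d a b" by unfold_locales (rule Dm_add1)
  have "Dm d a b = (\<Sum>p\<in>idxs. Dm d (sv p (a p)) b)"
    by (subst decomp[of a]) (rule A1.sum)
  also have "\<dots> = (\<Sum>p\<in>idxs. \<Sum>q\<in>idxs. Dm d (sv p (a p)) (sv q (b q)))"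
  proof (rule sum.cong[OF refl])
    fix p
    interpret A2: additive "\<lambda>b. Dm d (sv p (a p)) b" by unfold_locales (rule Dm_add2)
    show "Dm d (sv p (a p)) b = (\<Sum>q\<in>idxs. Dm d (sv p (a p)) (sv q (b q)))"
      by (subst decomp[of b]) (rule A2.sum)
  qed
  finally show ?thesis .
qed

lemma Dp_expand: "Dp d a b = (\<Sum>p\<in>idxs. \<Sum>q\<in>idxs. Dp d (sv p (a p)) (sv q (b q)))"
proof -
  interpret A1: additive "\<lambda>a. Dp d a b" by unfold_locales (rule Dp_add1)
  have "Dp d a b = (\<Sum>p\<in>idxs. Dp d (sv p (a p)) b)"
    by (subst decomp[of a]) (rule A1.sum)
  also have "\<dots> = (\<Sum>p\<in>idxs. \<Sum>q\<in>idxs. Dp d (sv p (a p)) (sv q (b q)))"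
  proof (rule sum.cong[OF refl])
    fix p
    interpret A2: additive "\<lambda>b. Dp d (sv p (a p)) b" by unfold_locales (rule Dp_add2)
    show "Dp d (sv p (a p)) b = (\<Sum>q\<in>idxs. Dp d (sv p (a p)) (sv q (b q)))"
      by (subst decomp[of b]) (rule A2.sum)
  qed
  finally show ?thesis .
qed

sublocale Z: vector_space s by (rule vs)

lemma vsJ: "vector_space (scJ s)"
  by unfold_locales (simp_all add: scJ_def fun_eq_iff Z.scale_right_distrib Z.scale_left_distrib)
lemma vsE: "vector_space (scE s)"
  by unfold_locales (simp_all add: scE_def scJ_def fun_eq_iff Z.scale_right_distrib Z.scale_left_distrib)

sublocale J: vector_space "scJ s" by (rule vsJ)
sublocale E: vector_space "scE s" by (rule vsE)

lemma alg2: "x * s c y = s c x * y"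
  by (metis alg mult.commute)

lemma alg3: "x * s c y = s c (x * y)" by (simp add: alg alg2)

lemma scJ_sv: "scJ s c (sv k z) = sv k (s c z)" by (simp add: scJ_def fun_eq_iff)
lemma scJ_0: "scJ s c (\<lambda>_. 0) = (\<lambda>_. 0)" by (simp add: scJ_def fun_eq_iff)

lemma bp_scale1: "bp d p (s c f) q g = scJ s c (bp d p f q g)"
  by (cases p; cases q) (simp_all add: scJ_sv scJ_0 d_scale alg alg2 Z.scale_right_diff_distrib)
lemma bp_scale2: "bp d p f q (s c g) = scJ s c (bp d p f q g)"
  by (cases p; cases q) (simp_all add: scJ_sv scJ_0 d_scale alg alg2 Z.scale_right_diff_distrib)

lemma jmult_scale1: "jmult d (scJ s c a) b = scJ s c (jmult d a b)"
proof -
  have "bp d p (s c (a p)) q (b q) k = s c (bp d p (a p) q (b q) k)" for p q k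
    by (simp add: bp_scale1 scJ_def)
  then show ?thesis by (simp add: jmult_def scJ_def fun_eq_iff Z.scale_sum_right)
qed
lemma jmult_scale2: "jmult d a (scJ s c b) = scJ s c (jmult d a b)"
proof -
  have "bp d p (a p) q (s c (b q)) k = s c (bp d p (a p) q (b q) k)" for p q k
    by (simp add: bp_scale2 scJ_def)
  then show ?thesis by (simp add: jmult_def scJ_def fun_eq_iff Z.scale_sum_right)
qed

lemma Dm_scale1: "Dm d (scJ s c a) b = scE s c (Dm d a b)"
  by (simp add: Dm_def scE_def fun_eq_iff jmult_scale1 jmult_scale2)
     (simp add: scJ_def Z.scale_right_diff_distrib)
lemma Dp_scale1: "Dp d (scJ s c a) b = scE s c (Dp d a b)"
  by (simp add: Dp_def scE_def fun_eq_iff jmult_scale1 jmult_scale2)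
     (simp add: scJ_def Z.scale_right_distrib)

lemma sv_scale: "sv k (s c u) = scJ s c (sv k u)" by (simp add: scJ_sv)

lemma G_scale: "G d k (s c u) = scE s c (G d k u)"
  by (cases k) (simp_all add: G_def sv_scale Dm_scale1 Dp_scale1)
lemma G_addu: "G d k (u + u') = G d k u + G d k u'"
  by (cases k) (simp_all add: G_def sv_add Dm_add1 Dp_add1)
lemma G0[simp]: "G d k 0 = 0"
  using G_addu[of k 0 0] by simp

definition Phi where "Phi v = (\<Sum>k\<in>idxs. G d k (v k))"

lemma Phi_hom: "module_hom (scJ s) (scE s) Phi"
  unfolding module_hom_def module_hom_axioms_def module_iff_vector_space
  using vsJ vsE
  by (simp add: Phi_def G_addu sum.distrib E.scale_sum_right G_scale scJ_def)

lemma Phi_sv: "Phi (sv k u) = G d k u"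
proof -
  have "G d j (if j = k then u else 0) = (if j = k then G d k u else 0)" for j by simp
  then show ?thesis by (simp add: Phi_def sum.delta')
qed


lemma Dop_eq: "Dop d a b = (if is_odd_el a \<and> is_odd_el b then Dp d a b else Dm d a b)"
  unfolding Dop_def Dp_def Dm_def by (auto simp: fun_eq_iff)

lemma range_sub: "E.subspace (range Phi)"
  using module_hom.subspace_image[OF Phi_hom J.subspace_UNIV] .

lemma Dpm_in: "Dpm d p q (sv p f) (sv q g) \<in> range Phi"
  by (metis main_eq Phi_sv rangeI)

lemma Dop_in: assumes "homog a" "homog b" shows "Dop d a b \<in> range Phi"
proof (cases "is_odd_el a \<and> is_odd_el b")
  case True
  have "Dop d a b = Dp d a b" unfolding Dop_eq using True by (rule if_P)
  also have "\<dots> = (\<Sum>p\<in>idxs. \<Sum>q\<in>idxs. Dp d (sv p (a p)) (sv q (b q)))" by (rule Dp_expand)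
  also have "\<dots> \<in> range Phi"
  proof (intro E.subspace_sum[OF range_sub])
    fix p q
    show "Dp d (sv p (a p)) (sv q (b q)) \<in> range Phi"
    proof (cases "a p = 0 \<or> b q = 0")
      case True then show ?thesis using E.subspace_0[OF range_sub] by auto
    next
      case False
      then have "odd_idx p \<and> odd_idx q" using True by (auto simp: is_odd_el_def)
      then show ?thesis using Dpm_in[of p q "a p" "b q"] by (simp add: Dpm_def)
    qed
  qed
  finally show ?thesis .
next
  case False
  have ev: "is_even_el a \<or> is_even_el b" using False assms by (auto simp: homog_def)
  have "Dop d a b = Dm d a b" unfolding Dop_eq using False by (rule if_not_P)
  also have "\<dots> = (\<Sum>p\<in>idxs. \<Sum>q\<in>idxs. Dm d (sv p (a p)) (sv q (b q)))" by (rule Dm_expand)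
  also have "\<dots> \<in> range Phi"
  proof (intro E.subspace_sum[OF range_sub])
    fix p q
    show "Dm d (sv p (a p)) (sv q (b q)) \<in> range Phi"
    proof (cases "a p = 0 \<or> b q = 0")
      case True then show ?thesis using E.subspace_0[OF range_sub] by auto
    next
      case False
      then have "\<not> (odd_idx p \<and> odd_idx q)" using ev by (auto simp: is_even_el_def)
      then have "Dpm d p q = Dm d" unfolding Dpm_def by (rule if_not_P)
      then show ?thesis using Dpm_in[of p q "a p" "b q"] by simp
    qed
  qed
  finally show ?thesis .
qed

lemma Inder_sub: "Inder s d \<subseteq> range Phi"
  unfolding Inder_def
  by (rule E.span_minimal[OF _ range_sub]) (auto intro: Dop_in)

lemma gen_in: "homog a \<Longrightarrow> homog b \<Longrightarrow> Dop d a b \<in> Inder s d"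
  unfolding Inder_def by (rule E.span_base) blast

lemma G_in: "G d k u \<in> Inder s d"
proof (cases "u = 0")
  case True then show ?thesis by (simp add: Inder_def E.span_zero)
next
  case False
  then have one: "(1::'z) \<noteq> 0" by (metis mult_1_right mult_zero_right)
  have h: "homog (sv p u)" "homog (sv p (1::'z))" for p
    by (cases p; auto simp: homog_def is_odd_el_def is_even_el_def odd_idx_def)+
  have o: "is_odd_el (sv p u) \<longleftrightarrow> odd_idx p" "is_odd_el (sv p (1::'z)) \<longleftrightarrow> odd_idx p" for p
    using False one by (auto simp: is_odd_el_def)
  have "\<exists>p q. G d k u = Dop d (sv p u) (sv q 1)"
    by (cases k) (auto simp: G_def Dop_eq o odd_idx_def)
  then show ?thesis using gen_in[OF h(1) h(2)] by auto
qed

lemma Phi_in: "Phi v \<in> Inder s d"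
  unfolding Phi_def Inder_def by (rule E.span_sum) (rule G_in[unfolded Inder_def])

lemma Phi_range: "range Phi = Inder s d"
  using Inder_sub Phi_in by blast

lemma Phi_app: "Phi v (sv r h) k = (\<Sum>j\<in>idxs. G d j (v j) (sv r h) k)"
  by (simp add: Phi_def sum_fun_apply)

lemma two_cancel: assumes "(2::'a) \<noteq> 0" "(x::'z) + x = 0" shows "x = 0"
proof -
  have "s 2 x = s (1 + 1) x" by simp
  also have "\<dots> = x + x" by (simp only: Z.scale_left_distrib Z.scale_one)
  finally have a: "s 2 x = x + x" .
  have "x = s (inverse 2) (s 2 x)" using assms(1) by simp
  also have "\<dots> = s (inverse 2) (x + x)" by (simp only: a)
  also have "\<dots> = 0" by (simp only: assms(2) Z.scale_zero_right)
  finally show ?thesis .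
qed

lemma Phi_inj:
  assumes char: "(2::'a) \<noteq> 0" and ZdZ: "Z.span {f * d g |f g. True} = UNIV" and P: "Phi v = 0"
  shows "v = 0"
proof -
  have z: "Phi v (sv r h) k = 0" for r h k using P by simp
  note ev = Phi_app idxs_def G_def Dm_def Dp_def jmult_sv
  have "v W2 = 0" using z[of W1 1 W3] by (simp add: ev)
  have "v W3 = 0" using z[of W1 1 W2] by (simp add: ev)
  have "v W1 = 0" using z[of W2 1 W3] by (simp add: ev)
  have "v X = 0" using z[of W1 1 X1] by (simp add: ev)
  have "v X1 = 0" using z[of W1 1 X] by (simp add: ev)
  have "v X2 = 0" using z[of W2 1 X] by (simp add: ev)
  have "v X3 = 0" using z[of W3 1 X] by (simp add: ev)
  have e0: "v E1 * d h + v E1 * d h = 0" for h using z[of E1 h E1] by (simp add: ev algebra_simps)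
  have e1: "v E1 * d h = 0" for h using two_cancel[OF char e0] .
  have K: "Z.subspace {z. v E1 * z = 0}"
    unfolding Z.subspace_def by (auto simp: distrib_left alg3)
  have "{f * d g |f g. True} \<subseteq> {z. v E1 * z = 0}"
  proof safe
    fix f g show "v E1 * (f * d g) = 0" by (simp add: mult.left_commute[of _ f] e1)
  qed
  then have "Z.span {f * d g |f g. True} \<subseteq> {z. v E1 * z = 0}" by (rule Z.span_minimal[OF _ K])
  then have "(1::'z) \<in> {z. v E1 * z = 0}" using ZdZ by (metis UNIV_I subsetD)
  then have "v E1 = 0" by simp
  show ?thesis by (rule ext8) (simp_all add: \<open>v E1 = 0\<close> \<open>v W1 = 0\<close> \<open>v W2 = 0\<close> \<open>v W3 = 0\<close>
    \<open>v X = 0\<close> \<open>v X1 = 0\<close> \<open>v X2 = 0\<close> \<open>v X3 = 0\<close>)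
qed

end

context vector_space begin

lemma in_span_finite_subset:
  assumes "a \<in> span S" shows "\<exists>T. finite T \<and> T \<subseteq> S \<and> a \<in> span T"
proof -
  obtain t r where t: "a = (\<Sum>x\<in>t. r x *s x)" "finite t" "t \<subseteq> S"
    using assms unfolding span_explicit by blast
  have "a \<in> span t" unfolding t(1) by (intro span_sum span_scale span_base)
  with t show ?thesis by blast
qed

lemma indep_lepoll_span:
  assumes ind: "independent A" and sub: "A \<subseteq> span S"
  shows "A \<lesssim> S"
proof (cases "finite S")
  case True
  then have "finite A \<and> card A \<le> card S" using independent_span_bound ind sub by blast
  then show ?thesis using True lepoll_iff_card_le by blast
next
  case False
  have cov: "A \<subseteq> (\<Union>T\<in>Fpow S. A \<inter> span T)"
  proof
    fix a assume "a \<in> A"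
    then obtain T where "finite T" "T \<subseteq> S" "a \<in> span T"
      using in_span_finite_subset sub by blast
    then show "a \<in> (\<Union>T\<in>Fpow S. A \<inter> span T)" using \<open>a \<in> A\<close> by (auto simp: Fpow_def)
  qed
  have each: "\<forall>T\<in>Fpow S. |A \<inter> span T| \<le>o |S|"
  proof
    fix T assume "T \<in> Fpow S"
    then have "finite T" by (simp add: Fpow_def)
    moreover have "independent (A \<inter> span T)" using ind independent_mono by blast
    ultimately have "finite (A \<inter> span T)" using independent_span_bound by blast
    then show "|A \<inter> span T| \<le>o |S|" using ordLeq3_finite_infinite False by blast
  qed
  have "|Fpow S| \<le>o |S|" using card_of_Fpow_infinite[OF False] ordIso_iff_ordLeq by blast
  then have "|\<Union>T\<in>Fpow S. A \<inter> span T| \<le>o |S|"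
    by (rule card_of_UNION_ordLeq_infinite[OF False _ each])
  then have "|A| \<le>o |S|" using card_of_mono1[OF cov] ordLeq_transitive by blast
  then show ?thesis unfolding lepoll_def card_of_ordLeq[symmetric] by blast
qed

end

definition E8 :: "'z set \<Rightarrow> (idx \<Rightarrow> 'z::zero) set" where
  "E8 C = (\<lambda>(k,c). sv k c) ` (idxs \<times> C)"

lemma sv_inj: "sv k x = sv k y \<Longrightarrow> x = y"
  by (metis sv_apply)

lemma E8_inj: assumes "0 \<notin> C" shows "inj_on (\<lambda>(k,c). sv k c) (idxs \<times> C)"
proof (rule inj_onI, clarify)
  fix k c k' c' assume c: "c \<in> C" "c' \<in> C" and e: "sv k c = sv k' c'"
  then have "sv k c k = sv k' c' k" by simp
  then have "c = (if k = k' then c' else 0)" by simp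
  then show "k = k' \<and> c = c'" using assms c by (auto split: if_splits)
qed

context jck begin

lemma sv_hom: "module_hom s (scJ s) (sv k)"
  unfolding module_hom_def module_hom_axioms_def module_iff_vector_space
  using vs vsJ by (simp add: sv_add sv_scale)

lemma E8_span: assumes "Z.span C = UNIV" shows "J.span (E8 C) = UNIV"
proof -
  have "sv k z \<in> J.span (E8 C)" for k z
  proof -
    have "sv k z \<in> sv k ` Z.span C" using assms by simp
    also have "\<dots> = J.span (sv k ` C)" using module_hom.span_image[OF sv_hom] by simp
    also have "\<dots> \<subseteq> J.span (E8 C)" by (rule J.span_mono) (auto simp: E8_def)
    finally show ?thesis .
  qed
  then have "v \<in> J.span (E8 C)" for v by (subst decomp[of v]) (rule J.span_sum)
  then show ?thesis by auto
qed

lemma E8_indep: assumes ind: "Z.independent C" shows "J.independent (E8 C)"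
  unfolding J.independent_explicit_module
proof (intro allI impI)
  fix t u v assume t: "finite t" "t \<subseteq> E8 C" and s0: "(\<Sum>w\<in>t. scJ s (u w) w) = 0" and v: "v \<in> t"
  from v t obtain k c0 where v': "v = sv k c0" "c0 \<in> C" by (auto simp: E8_def)
  define T where "T = {c \<in> C. sv k c \<in> t}"
  have inj: "inj (sv k :: 'z \<Rightarrow> _)" by (auto intro: injI sv_inj)
  have finT: "finite T"
    by (rule finite_subset[OF _ finite_vimageI[OF t(1) inj]]) (auto simp: T_def)
  have "0 = (\<Sum>w\<in>t. scJ s (u w) w) k" using s0 by simp
  also have "\<dots> = (\<Sum>w\<in>t. s (u w) (w k))" by (simp add: sum_fun_apply scJ_def)
  also have "\<dots> = (\<Sum>w\<in>sv k ` T. s (u w) (w k))"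
  proof (rule sum.mono_neutral_right[OF t(1)])
    show "sv k ` T \<subseteq> t" by (auto simp: T_def)
    show "\<forall>w\<in>t - sv k ` T. s (u w) (w k) = 0"
    proof
      fix w assume w: "w \<in> t - sv k ` T"
      then obtain k' c where wc: "w = sv k' c" "c \<in> C" using t(2) by (auto simp: E8_def)
      with w have "k' \<noteq> k" by (auto simp: T_def)
      then show "s (u w) (w k) = 0" using wc by simp
    qed
  qed
  also have "\<dots> = (\<Sum>c\<in>T. s (u (sv k c)) c)"
    by (subst sum.reindex) (auto intro: inj_on_subset[OF inj])
  finally have "(\<Sum>c\<in>T. s (u (sv k c)) c) = 0" by simp
  moreover have "T \<subseteq> C" "c0 \<in> T" using v v' by (auto simp: T_def)
  ultimately have "u (sv k c0) = 0"
    using Z.independentD[OF ind finT, of "\<lambda>c. u (sv k c)"] by blast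
  then show "u v = 0" using v' by simp
qed

end

theorem corollary4p5:
  fixes s :: "'a::field \<Rightarrow> 'z::comm_ring_1 \<Rightarrow> 'z"
    and d :: "'z \<Rightarrow> 'z"
    and B :: "((idx \<Rightarrow> 'z) \<Rightarrow> (idx \<Rightarrow> 'z)) set"
    and BJ :: "(idx \<Rightarrow> 'z) set"
    and C :: "'z set"
  assumes vs: "vector_space s"
    and alg: "\<And>c x y. s c (x * y) = s c x * y"
    and char: "(2::'a) \<noteq> 0"
    and lin: "Vector_Spaces.linear s s d"
    and leib: "\<And>x y. d (x * y) = d x * y + x * d y"
    and ZdZ: "module.span s {f * d g | f g. True} = UNIV"
    and bB: "is_basis_of (scE s) (Inder s d) B"
    and bJ: "is_basis_of (scJ s) UNIV BJ"
    and bC: "is_basis_of s UNIV C"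
  shows "B \<approx> BJ \<and> BJ \<approx> ({0..<8::nat} \<times> C)"
proof -
  interpret jck s d by (rule jck.intro[OF vs alg lin leib])
  from bB have B1: "B \<subseteq> Inder s d" "E.independent B" "E.span B = Inder s d"
    unfolding is_basis_of_def by auto
  from bJ have J1: "J.independent BJ" "J.span BJ = UNIV"
    unfolding is_basis_of_def by auto
  from bC have C1: "Z.independent C" "Z.span C = UNIV"
    unfolding is_basis_of_def by auto
  have H: "module_hom (scJ s) (scE s) Phi" by (rule Phi_hom)
  have rng: "E.span (Phi ` BJ) = Inder s d"
    using module_hom.span_image[OF H, of BJ] J1(2) Phi_range by simp
  have "B \<lesssim> Phi ` BJ" using E.indep_lepoll_span[OF B1(2)] B1(1) rng by simp
  then have l1: "B \<lesssim> BJ" using image_lepoll lepoll_trans by blast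
  have injP: "inj Phi" using module_hom.inj_iff_eq_0[OF H] Phi_inj[OF char ZdZ] by blast
  have indP: "E.independent (Phi ` BJ)"
    using module_hom.independent_injective_image[OF H J1(1)] injP by (simp add: inj_on_subset)
  have "Phi ` BJ \<subseteq> E.span B" using Phi_in B1(3) by auto
  then have "Phi ` BJ \<lesssim> B" using E.indep_lepoll_span[OF indP] by blast
  moreover have "BJ \<approx> Phi ` BJ"
    by (rule eqpoll_sym, rule inj_on_image_eqpoll_self) (simp add: inj_on_subset[OF injP])
  ultimately have l2: "BJ \<lesssim> B" using lepoll_trans1 by blast
  have b1: "B \<approx> BJ" by (rule lepoll_antisym[OF l1 l2])
  have z0: "0 \<notin> C" using C1(1) Z.dependent_zero by blast
  have "BJ \<lesssim> E8 C" using J.indep_lepoll_span[OF J1(1)] E8_span[OF C1(2)] by blast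
  moreover have "E8 C \<lesssim> BJ" using J.indep_lepoll_span[OF E8_indep[OF C1(1)]] J1(2) by blast
  ultimately have "BJ \<approx> E8 C" by (rule lepoll_antisym)
  also have "E8 C \<approx> idxs \<times> C" unfolding E8_def by (rule inj_on_image_eqpoll_self[OF E8_inj[OF z0]])
  also have "idxs \<times> C \<approx> {0..<8::nat} \<times> C"
  proof (rule times_eqpoll_cong[OF _ eqpoll_refl])
    show "idxs \<approx> {0..<8::nat}" by (subst eqpoll_iff_card) (simp_all add: idxs_def)
  qed
  finally show ?thesis using b1 by blast
qed

end
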